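(* The map $\Upsilon$ is a bijection from $\mathcal{F}$ to $\mathcal{C}^I$, with inverse given by $\Gamma$.
   Context: Fix $I\in\mathbb{N}$. $\mathcal{C}=\{f\in C(\mathbb{R}_+,\mathbb{R}_+):f(0)=0,f\text{ non-decreasing}\}$, $\mathcal{C}^\uparrow=\{f\in\mathcal{C}:f\text{ strictly increasing},\lim_{u\to\infty}f(u)=\infty\}$. For $\psi\in\mathcal{C}^I$, $\phi_i(u):=u-\sum_{j=1}^I2(i\wedge j)\psi_j(u)$; $\mathcal{F}:=\{\psi\in\mathcal{C}^I:\phi_I\in\mathcal{C}^\uparrow\}$; for $\psi\in\mathcal{F}$ each $\phi_i\in\mathcal{C}^\uparrow$ and $\Upsilon(\psi):=(\psi_i\circ\phi_i^{-1})_{i=1}^I$. For $\bar\psi\in\mathcal{C}^I$, $\gamma_I(z):=z$, $\gamma_i(z):=z+\sum_{j>i}2(j-i)\bar\psi_j(\gamma_j(z))$ for $i=I-1,\dots,0$ (each in $\mathcal{C}^\uparrow$), and $\Gamma(\bar\psi):=(\bar\psi_i\circ\gamma_i\circ\gamma_0^{-1})_{i=1}^I$. *)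

theory Defs
  imports "HOL-Analysis.Analysis"
begin

text \<open>Functions R+ -> R+ are represented as real => real; only values on {0..} matter.
  I-tuples are represented as nat => real => real, indexed by 1..I, normalised to be
  0 outside the index range {1..I} and outside the domain {0..}, so that equality of
  tuples is plain HOL equality.\<close>

definition Cfun :: "(real \<Rightarrow> real) \<Rightarrow> bool" where
  "Cfun f \<longleftrightarrow> continuous_on {0..} f \<and> f 0 = 0 \<and> (\<forall>u\<ge>0. f u \<ge> 0) \<and> mono_on {0..} f"

definition Cup :: "(real \<Rightarrow> real) \<Rightarrow> bool" where
  "Cup f \<longleftrightarrow> Cfun f \<and> strict_mono_on {0..} f \<and> filterlim f at_top at_top"

definition CI :: "nat \<Rightarrow> (nat \<Rightarrow> real \<Rightarrow> real) set" where
  "CI I = {\<psi>. (\<forall>i\<in>{1..I}. Cfun (\<psi> i)) \<and>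
              (\<forall>i u. (i \<notin> {1..I} \<or> u < 0) \<longrightarrow> \<psi> i u = 0)}"

definition phi :: "nat \<Rightarrow> (nat \<Rightarrow> real \<Rightarrow> real) \<Rightarrow> nat \<Rightarrow> real \<Rightarrow> real" where
  "phi I \<psi> i u = u - (\<Sum>j=1..I. 2 * real (min i j) * \<psi> j u)"

definition FF :: "nat \<Rightarrow> (nat \<Rightarrow> real \<Rightarrow> real) set" where
  "FF I = {\<psi> \<in> CI I. Cup (phi I \<psi> I)}"

definition Upsilon :: "nat \<Rightarrow> (nat \<Rightarrow> real \<Rightarrow> real) \<Rightarrow> nat \<Rightarrow> real \<Rightarrow> real" where
  "Upsilon I \<psi> = (\<lambda>i u. if i \<in> {1..I} \<and> 0 \<le> u
       then \<psi> i (the_inv_into {0..} (phi I \<psi> i) u) else 0)"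

function gam :: "nat \<Rightarrow> (nat \<Rightarrow> real \<Rightarrow> real) \<Rightarrow> nat \<Rightarrow> real \<Rightarrow> real" where
  "gam I \<psi> i z = (if I \<le> i then z
      else z + (\<Sum>j\<in>{i<..I}. 2 * real (j - i) * \<psi> j (gam I \<psi> j z)))"
  by pat_completeness auto
termination
  by (relation "Wellfounded.measure (\<lambda>(I, \<psi>, i, z). I - i)") auto

definition Gamma :: "nat \<Rightarrow> (nat \<Rightarrow> real \<Rightarrow> real) \<Rightarrow> nat \<Rightarrow> real \<Rightarrow> real" where
  "Gamma I \<psi> = (\<lambda>i u. if i \<in> {1..I} \<and> 0 \<le> u
       then \<psi> i (gam I \<psi> i (the_inv_into {0..} (gam I \<psi> 0) u)) else 0)"

end

theory Submission
  imports Defs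
begin

declare gam.simps[simp del]

lemma Cup_Cfun: "Cup f \<Longrightarrow> Cfun f" by (simp add: Cup_def)

lemma Cup_inj: "Cup f \<Longrightarrow> inj_on f {0..}"
  by (simp add: Cup_def strict_mono_on_imp_inj_on)

lemma Cup_surj:
  assumes "Cup f" "y \<ge> 0" shows "\<exists>x\<ge>0. f x = y"
proof -
  have c: "continuous_on {0..} f" "f 0 = 0" "filterlim f at_top at_top"
    using assms unfolding Cup_def Cfun_def by auto
  then have "eventually (\<lambda>x. f x \<ge> y) at_top" by (simp add: filterlim_at_top)
  then obtain b where b: "\<And>x. x \<ge> b \<Longrightarrow> f x \<ge> y" by (auto simp: eventually_at_top_linorder)
  have "f (max b 0) \<ge> y" using b by simp
  moreover have "continuous_on {0..max b 0} f" using c(1) by (rule continuous_on_subset) auto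
  ultimately obtain x where "0 \<le> x" "x \<le> max b 0" "f x = y"
    using IVT'[of f 0 y "max b 0"] c(2) assms(2) by auto
  then show ?thesis by auto
qed

lemma Cup_inv:
  assumes "Cup f" "y \<ge> 0"
  shows "the_inv_into {0..} f y \<ge> 0" "f (the_inv_into {0..} f y) = y"
proof -
  obtain x where "x \<ge> 0" "f x = y" using Cup_surj assms by blast
  then have "the_inv_into {0..} f y = x" using Cup_inj[OF assms(1)] by (intro the_inv_into_f_eq) auto
  then show "the_inv_into {0..} f y \<ge> 0" "f (the_inv_into {0..} f y) = y" using \<open>x\<ge>0\<close> \<open>f x = y\<close> by auto
qed

lemma Cup_inv2:
  assumes "Cup f" "x \<ge> 0"
  shows "the_inv_into {0..} f (f x) = x"
  using Cup_inj[OF assms(1)] assms(2) by (intro the_inv_into_f_f) auto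

lemma Cup_inv_Cup:
  assumes "Cup f" shows "Cup (the_inv_into {0..} f)"
proof -
  let ?h = "the_inv_into {0..} f"
  have c: "continuous_on {0..} f" "f 0 = 0" "filterlim f at_top at_top" "strict_mono_on {0..} f"
     "mono_on {0..} f" "\<And>u. u \<ge> 0 \<Longrightarrow> f u \<ge> 0"
    using assms unfolding Cup_def Cfun_def by auto
  have h0: "?h 0 = 0" using Cup_inv2[OF assms, of 0] c(2) by simp
  have sm: "strict_mono_on {0..} ?h"
  proof (rule strict_mono_onI)
    fix a b :: real assume ab: "a \<in> {0..}" "b \<in> {0..}" "a < b"
    show "?h a < ?h b"
    proof (rule ccontr)
      assume "\<not> ?h a < ?h b"
      then have "?h b \<le> ?h a" by simp
      then have "f (?h b) \<le> f (?h a)" using c(5) Cup_inv(1)[OF assms] ab by (auto intro: mono_onD)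
      then show False using Cup_inv(2)[OF assms] ab by auto
    qed
  qed
  have cont: "continuous_on {0..} ?h"
    unfolding continuous_on_eq_continuous_within
  proof
    fix y :: real assume y: "y \<in> {0..}"
    define b where "b = ?h y + 1"
    have b0: "b \<ge> 0" using Cup_inv(1)[OF assms] y by (simp add: b_def)
    have fb: "y < f b"
    proof -
      have "f (?h y) < f b" using Cup_inv(1)[OF assms] y b0 by (intro strict_mono_onD[OF c(4)]) (auto simp: b_def)
      then show ?thesis using Cup_inv(2)[OF assms] y by simp
    qed
    have img: "f ` {0..b} = {0..f b}"
    proof
      show "f ` {0..b} \<subseteq> {0..f b}"
      proof (rule image_subsetI)
        fix x assume "x \<in> {0..b}"
        then show "f x \<in> {0..f b}" using c(6)[of x] mono_onD[OF c(5), of x b] by auto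
      qed
      show "{0..f b} \<subseteq> f ` {0..b}"
      proof
        fix w assume w: "w \<in> {0..f b}"
        have "continuous_on {0..b} f" using c(1) by (rule continuous_on_subset) auto
        then obtain x where "0 \<le> x" "x \<le> b" "f x = w" using IVT'[of f 0 w b] c(2) w b0 by auto
        then show "w \<in> f ` {0..b}" by auto
      qed
    qed
    have "continuous_on (f ` {0..b}) ?h"
      apply (rule continuous_on_inv)
      using c(1) apply (rule continuous_on_subset) apply auto[1]
       apply simp
      using Cup_inv2[OF assms] by auto
    then have "continuous_on {0..f b} ?h" using img by simp
    then have "continuous (at y within {0..f b}) ?h"
      using y fb by (simp add: continuous_on_eq_continuous_within)
    moreover have "at y within {0..f b} = at y within {0..}"
      by (rule at_within_nhd[where S="{..<f b}"]) (use fb in auto)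
    ultimately show "continuous (at y within {0..}) ?h" by simp
  qed
  have lim: "filterlim ?h at_top at_top"
    unfolding filterlim_at_top
  proof
    fix M :: real
    have "\<forall>y\<ge>f (max M 0). M \<le> ?h y"
    proof (intro allI impI)
      fix y assume y: "f (max M 0) \<le> y"
      have y0: "y \<ge> 0" using y c(6)[of "max M 0"] by simp
      show "M \<le> ?h y"
      proof (rule ccontr)
        assume "\<not> M \<le> ?h y"
        then have "f (?h y) < f (max M 0)" using Cup_inv(1)[OF assms y0]
          by (intro strict_mono_onD[OF c(4)]) auto
        then show False using Cup_inv(2)[OF assms y0] y by simp
      qed
    qed
    then show "eventually (\<lambda>y. M \<le> ?h y) at_top" by (auto simp: eventually_at_top_linorder)
  qed
  show ?thesis unfolding Cup_def Cfun_def
    using cont h0 sm lim Cup_inv(1)[OF assms] strict_mono_on_imp_mono_on[OF sm] by auto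
qed


lemma Cfun_cong: assumes "Cfun f" "\<And>u. u \<ge> 0 \<Longrightarrow> g u = f u" shows "Cfun g"
proof -
  have "continuous_on {0..} g" using assms unfolding Cfun_def
    by (metis atLeast_iff continuous_on_cong)
  moreover have "mono_on {0..} g" using assms unfolding Cfun_def mono_on_def by auto
  ultimately show ?thesis using assms unfolding Cfun_def by auto
qed

lemma Cup_cong: assumes "Cup f" "\<And>u. u \<ge> 0 \<Longrightarrow> g u = f u" shows "Cup g"
proof -
  have "Cfun g" using Cfun_cong assms Cup_Cfun by blast
  moreover have "strict_mono_on {0..} g" using assms unfolding Cup_def strict_mono_on_def by auto
  moreover have "filterlim g at_top at_top"
  proof -
    have "eventually (\<lambda>u. f u = g u) at_top"
      using eventually_ge_at_top[of "0::real"] by eventually_elim (use assms in auto)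
    then show ?thesis using assms(1) unfolding Cup_def using filterlim_cong by blast
  qed
  ultimately show ?thesis unfolding Cup_def by auto
qed

lemma Cfun_comp: assumes "Cfun f" "Cfun g" shows "Cfun (\<lambda>u. f (g u))"
proof -
  have gi: "g ` {0..} \<subseteq> {0..}" using assms(2) unfolding Cfun_def by auto
  have "continuous_on {0..} (\<lambda>u. f (g u))"
    using continuous_on_compose[of "{0..}" g f] assms gi continuous_on_subset[of "{0..}" f "g ` {0..}"]
    unfolding Cfun_def comp_def by auto
  moreover have "mono_on {0..} (\<lambda>u. f (g u))"
  proof (rule mono_onI)
    fix r s :: real assume "r \<in> {0..}" "s \<in> {0..}" "r \<le> s"
    then show "f (g r) \<le> f (g s)" using assms unfolding Cfun_def mono_on_def by auto
  qed
  ultimately show ?thesis using assms unfolding Cfun_def by auto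
qed

lemma Cup_comp: assumes "Cup f" "Cup g" shows "Cup (\<lambda>u. f (g u))"
proof -
  have "Cfun (\<lambda>u. f (g u))" using Cfun_comp assms Cup_Cfun by blast
  moreover have "strict_mono_on {0..} (\<lambda>u. f (g u))"
  proof (rule strict_mono_onI)
    fix r s :: real assume "r \<in> {0..}" "s \<in> {0..}" "r < s"
    then show "f (g r) < f (g s)" using assms unfolding Cup_def Cfun_def strict_mono_on_def by auto
  qed
  moreover have "filterlim (\<lambda>u. f (g u)) at_top at_top"
    using assms unfolding Cup_def using filterlim_compose by blast
  ultimately show ?thesis unfolding Cup_def by auto
qed

lemma Cup_id: "Cup (\<lambda>u. u)"
  unfolding Cup_def Cfun_def by (auto simp: filterlim_ident strict_mono_on_def mono_on_def)

lemma Cup_add: assumes "Cup f" "Cfun g" shows "Cup (\<lambda>u. f u + g u)"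
proof -
  have c: "continuous_on {0..} (\<lambda>u. f u + g u)" using assms unfolding Cup_def Cfun_def
    by (auto intro: continuous_on_add)
  have m: "strict_mono_on {0..} (\<lambda>u. f u + g u)"
  proof (rule strict_mono_onI)
    fix r s :: real assume "r \<in> {0..}" "s \<in> {0..}" "r < s"
    then have "f r < f s" "g r \<le> g s" using assms unfolding Cup_def Cfun_def strict_mono_on_def mono_on_def
      by auto
    then show "f r + g r < f s + g s" by simp
  qed
  have l: "filterlim (\<lambda>u. f u + g u) at_top at_top"
  proof (rule filterlim_at_top_mono)
    show "filterlim f at_top at_top" using assms unfolding Cup_def by auto
    show "eventually (\<lambda>u. f u \<le> f u + g u) at_top"
      using eventually_ge_at_top[of "0::real"] by eventually_elim (use assms in \<open>auto simp: Cfun_def\<close>)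
  qed
  show ?thesis unfolding Cup_def Cfun_def using c m l strict_mono_on_imp_mono_on[OF m] assms
    by (auto simp: Cup_def Cfun_def intro: add_nonneg_nonneg)
qed

lemma Cfun_sum:
  assumes "finite S" "\<And>j. j \<in> S \<Longrightarrow> c j \<ge> 0" "\<And>j. j \<in> S \<Longrightarrow> Cfun (F j)"
  shows "Cfun (\<lambda>u. \<Sum>j\<in>S. c j * F j u)"
proof -
  have "continuous_on {0..} (\<lambda>u. \<Sum>j\<in>S. c j * F j u)"
    using assms(3) unfolding Cfun_def by (auto intro!: continuous_intros)
  moreover have "mono_on {0..} (\<lambda>u. \<Sum>j\<in>S. c j * F j u)"
  proof (rule mono_onI)
    fix r s :: real assume rs: "r \<in> {0..}" "s \<in> {0..}" "r \<le> s"
    show "(\<Sum>j\<in>S. c j * F j r) \<le> (\<Sum>j\<in>S. c j * F j s)"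
    proof (rule sum_mono)
      fix j assume "j \<in> S"
      then have "F j r \<le> F j s" "c j \<ge> 0" using assms rs unfolding Cfun_def mono_on_def by auto
      then show "c j * F j r \<le> c j * F j s" by (rule mult_left_mono)
    qed
  qed
  moreover have "\<forall>u\<ge>0. (\<Sum>j\<in>S. c j * F j u) \<ge> 0"
    using assms unfolding Cfun_def by (auto intro!: sum_nonneg)
  moreover have "(\<Sum>j\<in>S. c j * F j 0) = 0" using assms unfolding Cfun_def by auto
  ultimately show ?thesis unfolding Cfun_def by auto
qed


lemma sum_shift:
  "(\<Sum>j\<in>{1..I}. real (j - min i j) * F j) = (\<Sum>j\<in>{i<..I}. real (j - i) * (F j :: real))"
proof (rule sum.mono_neutral_cong_right)
  show "finite {1..I}" by simp
  show "{i<..I} \<subseteq> {1..I}" by auto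
  show "\<forall>j\<in>{1..I} - {i<..I}. real (j - min i j) * F j = 0" by auto
  show "\<And>j. j \<in> {i<..I} \<Longrightarrow> real (j - min i j) * F j = real (j - i) * F j" by auto
qed

lemma phi_split:
  assumes "i \<le> I"
  shows "phi I \<psi> i u = phi I \<psi> I u + (\<Sum>j\<in>{i<..I}. 2 * real (j - i) * \<psi> j u)"
proof -
  have "(\<Sum>j=1..I. 2 * real (min i j) * \<psi> j u) =
        (\<Sum>j=1..I. 2 * real (min I j) * \<psi> j u - 2 * (real (j - min i j) * \<psi> j u))"
    by (rule sum.cong) (auto simp: of_nat_diff algebra_simps)
  also have "\<dots> = (\<Sum>j=1..I. 2 * real (min I j) * \<psi> j u) - 2 * (\<Sum>j\<in>{1..I}. real (j - min i j) * \<psi> j u)"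
    by (simp add: sum_subtractf sum_distrib_left)
  also have "\<dots> = (\<Sum>j=1..I. 2 * real (min I j) * \<psi> j u) - (\<Sum>j\<in>{i<..I}. 2 * real (j - i) * \<psi> j u)"
    by (subst sum_shift) (simp add: sum_distrib_left algebra_simps)
  finally show ?thesis unfolding phi_def by simp
qed

lemma phi0: "phi I \<psi> 0 u = u" by (simp add: phi_def)

lemma FF_phi_Cup:
  assumes "\<psi> \<in> FF I" "i \<le> I" shows "Cup (phi I \<psi> i)"
proof -
  have cup: "Cup (phi I \<psi> I)" and ci: "\<psi> \<in> CI I" using assms by (auto simp: FF_def)
  have "Cfun (\<lambda>u. \<Sum>j\<in>{i<..I}. (2 * real (j - i)) * \<psi> j u)"
    by (rule Cfun_sum) (use ci in \<open>auto simp: CI_def\<close>)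
  then have "Cup (\<lambda>u. phi I \<psi> I u + (\<Sum>j\<in>{i<..I}. 2 * real (j - i) * \<psi> j u))"
    by (rule Cup_add[OF cup])
  moreover have "phi I \<psi> i = (\<lambda>u. phi I \<psi> I u + (\<Sum>j\<in>{i<..I}. 2 * real (j - i) * \<psi> j u))"
    by (rule ext, rule phi_split[OF assms(2)])
  ultimately show ?thesis by (simp only:)
qed

lemma gam_eq: "gam I \<psi> i z = z + (\<Sum>j\<in>{i<..I}. 2 * real (j - i) * \<psi> j (gam I \<psi> j z))"
  by (subst gam.simps) auto

lemma gam_Cup:
  assumes "\<psi> \<in> CI I" shows "Cup (gam I \<psi> i)"
proof (induction "I - i" arbitrary: i rule: less_induct)
  case less
  have "Cfun (\<lambda>z. \<Sum>j\<in>{i<..I}. (2 * real (j - i)) * \<psi> j (gam I \<psi> j z))"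
  proof (rule Cfun_sum)
    fix j assume j: "j \<in> {i<..I}"
    then have "Cup (gam I \<psi> j)" using less by auto
    moreover have "Cfun (\<psi> j)" using assms j by (auto simp: CI_def)
    ultimately show "Cfun (\<lambda>z. \<psi> j (gam I \<psi> j z))" using Cfun_comp Cup_Cfun by blast
  qed auto
  then have "Cup (\<lambda>z. z + (\<Sum>j\<in>{i<..I}. 2 * real (j - i) * \<psi> j (gam I \<psi> j z)))"
    by (rule Cup_add[OF Cup_id])
  then show ?case by (subst gam_eq[abs_def]) simp
qed


lemma Upsilon_CI:
  assumes "\<psi> \<in> FF I" shows "Upsilon I \<psi> \<in> CI I"
proof -
  have ci: "\<psi> \<in> CI I" using assms by (simp add: FF_def)
  have "Cfun (Upsilon I \<psi> i)" if i: "i \<in> {1..I}" for i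
  proof (rule Cfun_cong)
    have "Cup (phi I \<psi> i)" using FF_phi_Cup[OF assms] i by auto
    then have "Cfun (the_inv_into {0..} (phi I \<psi> i))" using Cup_inv_Cup Cup_Cfun by blast
    moreover have "Cfun (\<psi> i)" using ci i by (simp add: CI_def)
    ultimately show "Cfun (\<lambda>u. \<psi> i (the_inv_into {0..} (phi I \<psi> i) u))" using Cfun_comp by blast
    show "\<And>u. 0 \<le> u \<Longrightarrow> Upsilon I \<psi> i u = \<psi> i (the_inv_into {0..} (phi I \<psi> i) u)"
      using i by (simp add: Upsilon_def)
  qed
  then show ?thesis unfolding CI_def Upsilon_def by auto
qed

lemma Ups_phi:
  assumes "\<psi> \<in> FF I" "j \<in> {1..I}" "u \<ge> 0"
  shows "Upsilon I \<psi> j (phi I \<psi> j u) = \<psi> j u"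
proof -
  have c: "Cup (phi I \<psi> j)" using FF_phi_Cup[OF assms(1)] assms(2) by auto
  then have "phi I \<psi> j u \<ge> 0" using assms(3) by (auto simp: Cup_def Cfun_def)
  then show ?thesis using assms(2) Cup_inv2[OF c assms(3)] by (simp add: Upsilon_def)
qed

lemma gam_ident:
  assumes "\<psi> \<in> FF I" "u \<ge> 0"
  shows "i \<le> I \<Longrightarrow> gam I (Upsilon I \<psi>) i (phi I \<psi> I u) = phi I \<psi> i u"
proof (induction "I - i" arbitrary: i rule: less_induct)
  case less
  have "gam I (Upsilon I \<psi>) i (phi I \<psi> I u) = phi I \<psi> I u +
     (\<Sum>j\<in>{i<..I}. 2 * real (j - i) * Upsilon I \<psi> j (gam I (Upsilon I \<psi>) j (phi I \<psi> I u)))"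
    by (rule gam_eq)
  also have "\<dots> = phi I \<psi> I u + (\<Sum>j\<in>{i<..I}. 2 * real (j - i) * \<psi> j u)"
  proof -
    have "(\<Sum>j\<in>{i<..I}. 2 * real (j - i) * Upsilon I \<psi> j (gam I (Upsilon I \<psi>) j (phi I \<psi> I u)))
        = (\<Sum>j\<in>{i<..I}. 2 * real (j - i) * \<psi> j u)"
    proof (rule sum.cong)
      fix j assume j: "j \<in> {i<..I}"
      then have "gam I (Upsilon I \<psi>) j (phi I \<psi> I u) = phi I \<psi> j u" using less by auto
      moreover have "Upsilon I \<psi> j (phi I \<psi> j u) = \<psi> j u" using Ups_phi assms j by auto
      ultimately show "2 * real (j - i) * Upsilon I \<psi> j (gam I (Upsilon I \<psi>) j (phi I \<psi> I u))
        = 2 * real (j - i) * \<psi> j u" by simp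
    qed simp
    then show ?thesis by simp
  qed
  also have "\<dots> = phi I \<psi> i u" using phi_split[OF less.prems] by simp
  finally show ?case .
qed

lemma Gamma_Upsilon:
  assumes "\<psi> \<in> FF I" shows "Gamma I (Upsilon I \<psi>) = \<psi>"
proof (intro ext)
  fix i u
  have ci: "\<psi> \<in> CI I" using assms by (simp add: FF_def)
  show "Gamma I (Upsilon I \<psi>) i u = \<psi> i u"
  proof (cases "i \<in> {1..I} \<and> 0 \<le> u")
    case True
    have cg: "Cup (gam I (Upsilon I \<psi>) 0)" using gam_Cup Upsilon_CI assms by blast
    have cp: "Cup (phi I \<psi> I)" using assms by (simp add: FF_def)
    have p0: "phi I \<psi> I u \<ge> 0" using cp True by (auto simp: Cup_def Cfun_def)
    have "gam I (Upsilon I \<psi>) 0 (phi I \<psi> I u) = u" using gam_ident[OF assms, of u 0] True phi0 by auto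
    then have "the_inv_into {0..} (gam I (Upsilon I \<psi>) 0) u = phi I \<psi> I u"
      using Cup_inj[OF cg] p0 by (intro the_inv_into_f_eq) auto
    then have "Gamma I (Upsilon I \<psi>) i u = Upsilon I \<psi> i (gam I (Upsilon I \<psi>) i (phi I \<psi> I u))"
      using True by (simp add: Gamma_def)
    also have "\<dots> = Upsilon I \<psi> i (phi I \<psi> i u)" using gam_ident[OF assms, of u i] True by auto
    also have "\<dots> = \<psi> i u" using Ups_phi[OF assms] True by auto
    finally show ?thesis .
  next
    case False
    then show ?thesis using ci by (auto simp: Gamma_def CI_def)
  qed
qed


lemma Gamma_CI:
  assumes "\<psi> \<in> CI I" shows "Gamma I \<psi> \<in> CI I"
proof -
  have "Cfun (Gamma I \<psi> i)" if i: "i \<in> {1..I}" for i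
  proof (rule Cfun_cong)
    have "Cup (\<lambda>u. gam I \<psi> i (the_inv_into {0..} (gam I \<psi> 0) u))"
      using Cup_comp gam_Cup[OF assms] Cup_inv_Cup by blast
    moreover have "Cfun (\<psi> i)" using assms i by (simp add: CI_def)
    ultimately show "Cfun (\<lambda>u. \<psi> i (gam I \<psi> i (the_inv_into {0..} (gam I \<psi> 0) u)))"
      using Cfun_comp Cup_Cfun by blast
    show "\<And>u. 0 \<le> u \<Longrightarrow> Gamma I \<psi> i u = \<psi> i (gam I \<psi> i (the_inv_into {0..} (gam I \<psi> 0) u))"
      using i by (simp add: Gamma_def)
  qed
  then show ?thesis unfolding CI_def Gamma_def by auto
qed

lemma Gamma_key:
  assumes "\<psi> \<in> CI I" "z \<ge> 0" "i \<le> I"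
  shows "phi I (Gamma I \<psi>) i (gam I \<psi> 0 z) = gam I \<psi> i z"
proof -
  let ?G = "Gamma I \<psi>"
  let ?x = "gam I \<psi> 0 z"
  have cg: "Cup (gam I \<psi> 0)" using gam_Cup[OF assms(1)] .
  have x0: "?x \<ge> 0" using cg assms(2) by (auto simp: Cup_def Cfun_def)
  have Gj: "?G j ?x = \<psi> j (gam I \<psi> j z)" if "j \<in> {1..I}" for j
    using that x0 Cup_inv2[OF cg assms(2)] by (simp add: Gamma_def)
  have s: "\<And>k. (\<Sum>j\<in>{k<..I}. 2 * real (j - k) * ?G j ?x) = (\<Sum>j\<in>{k<..I}. 2 * real (j - k) * \<psi> j (gam I \<psi> j z))"
    by (rule sum.cong) (auto simp: Gj)
  have "phi I ?G 0 ?x = phi I ?G I ?x + (\<Sum>j\<in>{0<..I}. 2 * real (j - 0) * ?G j ?x)"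
    by (rule phi_split) simp
  then have "phi I ?G I ?x = z"
    using phi0[of I ?G ?x] gam_eq[of I \<psi> 0 z] s[of 0] by simp
  then show ?thesis using phi_split[OF assms(3), of ?G ?x] s[of i] gam_eq[of I \<psi> i z] by simp
qed

lemma Gamma_FF:
  assumes "\<psi> \<in> CI I" shows "Gamma I \<psi> \<in> FF I"
proof -
  let ?H = "the_inv_into {0..} (gam I \<psi> 0)"
  have cg: "Cup (gam I \<psi> 0)" using gam_Cup[OF assms(1)] .
  have "Cup (phi I (Gamma I \<psi>) I)"
  proof (rule Cup_cong)
    show "Cup ?H" using Cup_inv_Cup[OF cg] .
    fix u :: real assume u: "u \<ge> 0"
    have "phi I (Gamma I \<psi>) I (gam I \<psi> 0 (?H u)) = gam I \<psi> I (?H u)"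
      using Gamma_key[OF assms Cup_inv(1)[OF cg u]] by simp
    also have "\<dots> = ?H u" using gam_eq[of I \<psi> I] by simp
    finally show "phi I (Gamma I \<psi>) I u = ?H u" using Cup_inv(2)[OF cg u] by simp
  qed
  then show ?thesis using Gamma_CI[OF assms] by (simp add: FF_def)
qed

lemma Upsilon_Gamma:
  assumes "\<psi> \<in> CI I" shows "Upsilon I (Gamma I \<psi>) = \<psi>"
proof (intro ext)
  fix i u
  show "Upsilon I (Gamma I \<psi>) i u = \<psi> i u"
  proof (cases "i \<in> {1..I} \<and> 0 \<le> u")
    case True
    let ?G = "Gamma I \<psi>"
    let ?H = "the_inv_into {0..} (gam I \<psi> 0)"
    have cg: "Cup (gam I \<psi> 0)" using gam_Cup[OF assms(1)] .
    have cp: "Cup (phi I ?G i)" using FF_phi_Cup[OF Gamma_FF[OF assms]] True by auto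
    define w where "w = the_inv_into {0..} (phi I ?G i) u"
    have w: "w \<ge> 0" "phi I ?G i w = u" using Cup_inv[OF cp] True by (auto simp: w_def)
    define z where "z = ?H w"
    have z: "z \<ge> 0" "gam I \<psi> 0 z = w" using Cup_inv[OF cg w(1)] by (auto simp: z_def)
    have "gam I \<psi> i z = u" using Gamma_key[OF assms z(1), of i] True z(2) w(2) by simp
    have "Upsilon I ?G i u = ?G i w" using True by (simp add: Upsilon_def w_def)
    also have "\<dots> = \<psi> i (gam I \<psi> i z)" unfolding z_def using True w(1) by (simp add: Gamma_def)
    also have "\<dots> = \<psi> i u" using \<open>gam I \<psi> i z = u\<close> by simp
    finally show ?thesis .
  next
    case False
    then show ?thesis using assms by (auto simp: Upsilon_def CI_def)
  qed
qed

theorem proposition3p7: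
  fixes I :: nat
  assumes "1 \<le> I"
  shows "bij_betw (Upsilon I) (FF I) (CI I)
    \<and> (\<forall>\<psi>\<in>CI I. Gamma I \<psi> \<in> FF I \<and> Upsilon I (Gamma I \<psi>) = \<psi>)
    \<and> (\<forall>\<psi>\<in>FF I. Gamma I (Upsilon I \<psi>) = \<psi>)"
proof -
  have "bij_betw (Upsilon I) (FF I) (CI I)"
    by (rule bij_betw_byWitness[where f'="Gamma I"])
       (auto simp: Gamma_Upsilon Upsilon_Gamma Upsilon_CI Gamma_FF)
  then show ?thesis by (simp add: Gamma_Upsilon Upsilon_Gamma Gamma_FF)
qed

end
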